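(* Let a Lie group with Lie algebra $\mathfrak g$ act on a manifold $N$, with induced action $\xi\triangleright f$ of $\xi\in\mathfrak g$ on $f\in C^\infty(N)$, choose a basis $\{e_i\}$ of $\mathfrak g$ with dual basis $\{e^i\}$, and define derivations of $C^\infty(N)\otimes S(\mathfrak g)$ by $\check e_i(v)=[e_i,v]$, $\check e_i(f)=0$; $\check e^i(v)=e^i(v)$, $\check e^i(f)=0$; $\check c_i(v)=0$, $\check c_i(f)=e_i\triangleright f$. Let $\sum X\otimes Y=-\sum_i(\check c_i+\check e_i/2)\otimes\check e^i$ and define, for functions $a$ and $1$-forms $\xi$, $$\hat\nabla_a\xi=\sum\big(X(a)\,\mathcal L_Y\xi-Y(a)\,\mathcal L_X\xi\big)$$ ($\mathcal L$ the Lie derivative). Then for $v,w\in\mathfrak g$ and $f,h\in C^\infty(N)$: $$\hat\nabla_v{\rm d}w=\tfrac12{\rm d}[v,w],\quad \hat\nabla_v{\rm d}h={\rm d}(v\triangleright h),\quad \hat\nabla_f{\rm d}w=0,\quad\hat\nabla_f{\rm d}h=0.$$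
   Context: $\hat\nabla$ is the preconnection induced by a cochain twist $F^{-1}=1\otimes1+\hbar\sum X\otimes Y+O(\hbar^2)$: with $a\bullet\xi=(F^{-(1)}\triangleright a)(F^{-(2)}\triangleright\xi)$ (vector fields acting by Lie derivative), $a\bullet\xi-\xi\bullet a=\hbar\hat\nabla_a\xi+O(\hbar^2)$. Here $v\in\mathfrak g$ are viewed as linear functions on $\mathfrak g^*$, so these are objects on $N\times\mathfrak g^*$. *)

theory Defs
  imports Main "HOL.Real_Vector_Spaces"
begin

text \<open>Algebraic model of the setting.  'g is the Lie algebra, 'f stands for C^inf(N),
 'a stands for C^inf(N) (x) S(g) = functions on N x g^*, 'w for the 1-forms on N x g^*.\<close>

definition lie_algebra :: "('g::real_vector \<Rightarrow> 'g \<Rightarrow> 'g) \<Rightarrow> bool" where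
  "lie_algebra br \<longleftrightarrow>
     (\<forall>u. linear (br u)) \<and> (\<forall>u v. br u v = - br v u) \<and>
     (\<forall>u v w. br u (br v w) + br v (br w u) + br w (br u v) = 0)"

definition is_deriv :: "('r::{comm_ring_1,real_algebra_1} \<Rightarrow> 'r) \<Rightarrow> bool" where
  "is_deriv D \<longleftrightarrow>
     (\<forall>a b. D (a + b) = D a + D b) \<and> (\<forall>r a. D (of_real r * a) = of_real r * D a) \<and>
     (\<forall>a b. D (a * b) = a * D b + b * D a)"

definition lie_action :: "('g::real_vector \<Rightarrow> 'g \<Rightarrow> 'g) \<Rightarrow> ('g \<Rightarrow> 'f::{comm_ring_1,real_algebra_1} \<Rightarrow> 'f) \<Rightarrow> bool" where
  "lie_action br act \<longleftrightarrow>
     (\<forall>f. linear (\<lambda>v. act v f)) \<and> (\<forall>v. is_deriv (act v)) \<and>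
     (\<forall>v w f. act (br v w) f = act v (act w f) - act w (act v f))"

definition dual_basis :: "('i::finite \<Rightarrow> 'g::real_vector) \<Rightarrow> ('i \<Rightarrow> 'g \<Rightarrow> real) \<Rightarrow> bool" where
  "dual_basis e ed \<longleftrightarrow>
     (\<forall>i. linear (ed i)) \<and> (\<forall>i j. ed i (e j) = (if i = j then 1 else 0)) \<and>
     (\<forall>v. v = (\<Sum>i\<in>UNIV. ed i v *\<^sub>R e i))"

inductive_set gen_alg :: "('f \<Rightarrow> 'a::{comm_ring_1,real_algebra_1}) \<Rightarrow> ('g \<Rightarrow> 'a) \<Rightarrow> 'a set"
  for jF jg where
  "jF f \<in> gen_alg jF jg"
| "jg v \<in> gen_alg jF jg"
| "of_real r \<in> gen_alg jF jg"
| "a \<in> gen_alg jF jg \<Longrightarrow> b \<in> gen_alg jF jg \<Longrightarrow> a + b \<in> gen_alg jF jg"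
| "a \<in> gen_alg jF jg \<Longrightarrow> b \<in> gen_alg jF jg \<Longrightarrow> a * b \<in> gen_alg jF jg"

definition forms_module :: "('a::{comm_ring_1,real_algebra_1} \<Rightarrow> 'w::ab_group_add \<Rightarrow> 'w) \<Rightarrow> bool" where
  "forms_module sc \<longleftrightarrow>
     (\<forall>a b x. sc (a * b) x = sc a (sc b x)) \<and> (\<forall>x. sc 1 x = x) \<and>
     (\<forall>a b x. sc (a + b) x = sc a x + sc b x) \<and> (\<forall>a x y. sc a (x + y) = sc a x + sc a y)"

definition differential :: "('a::{comm_ring_1,real_algebra_1} \<Rightarrow> 'w::ab_group_add \<Rightarrow> 'w) \<Rightarrow> ('a \<Rightarrow> 'w) \<Rightarrow> bool" where
  "differential sc d \<longleftrightarrow>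
     (\<forall>a b. d (a + b) = d a + d b) \<and> (\<forall>r a. d (of_real r * a) = sc (of_real r) (d a)) \<and>
     (\<forall>a b. d (a * b) = sc a (d b) + sc b (d a))"

inductive_set gen_forms :: "('a \<Rightarrow> 'w::ab_group_add \<Rightarrow> 'w) \<Rightarrow> ('a \<Rightarrow> 'w) \<Rightarrow> 'w set"
  for sc d where
  "0 \<in> gen_forms sc d"
| "d a \<in> gen_forms sc d"
| "x \<in> gen_forms sc d \<Longrightarrow> sc a x \<in> gen_forms sc d"
| "x \<in> gen_forms sc d \<Longrightarrow> y \<in> gen_forms sc d \<Longrightarrow> x + y \<in> gen_forms sc d"

text \<open>Lie derivative of 1-forms along a derivation (vector field) X (Cartan's formulas).\<close>
definition lie_derivative :: "('a::{comm_ring_1,real_algebra_1} \<Rightarrow> 'w::ab_group_add \<Rightarrow> 'w) \<Rightarrow> ('a \<Rightarrow> 'w)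
    \<Rightarrow> (('a \<Rightarrow> 'a) \<Rightarrow> 'w \<Rightarrow> 'w) \<Rightarrow> bool" where
  "lie_derivative sc d L \<longleftrightarrow>
     (\<forall>X. is_deriv X \<longrightarrow>
        (\<forall>x y. L X (x + y) = L X x + L X y) \<and>
        (\<forall>a x. L X (sc a x) = sc (X a) x + sc a (L X x)) \<and>
        (\<forall>b. L X (d b) = d (X b)))"

text \<open>hat-nabla for sum X (x) Y = - sum_i (c_i + e_i/2) (x) e^i.\<close>
definition hat_nabla :: "('a::{comm_ring_1,real_algebra_1} \<Rightarrow> 'w::ab_group_add \<Rightarrow> 'w)
    \<Rightarrow> (('a \<Rightarrow> 'a) \<Rightarrow> 'w \<Rightarrow> 'w) \<Rightarrow> ('i::finite \<Rightarrow> 'a \<Rightarrow> 'a) \<Rightarrow> ('i \<Rightarrow> 'a \<Rightarrow> 'a) \<Rightarrow> ('i \<Rightarrow> 'a \<Rightarrow> 'a)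
    \<Rightarrow> 'a \<Rightarrow> 'w \<Rightarrow> 'w" where
  "hat_nabla sc L cc ee eu a x =
     (let Xs = (\<lambda>i b. - (cc i b + of_real (1/2) * ee i b)); Ys = eu in
      (\<Sum>i\<in>UNIV. sc (Xs i a) (L (Ys i) x) - sc (Ys i a) (L (Xs i) x)))"

end

theory Submission
  imports Defs
begin

theorem proposition6p1p3:
  fixes br :: "'g::real_vector \<Rightarrow> 'g \<Rightarrow> 'g"
    and act :: "'g \<Rightarrow> 'f::{comm_ring_1,real_algebra_1} \<Rightarrow> 'f"
    and e :: "'i::finite \<Rightarrow> 'g" and ed :: "'i \<Rightarrow> 'g \<Rightarrow> real"
    and jF :: "'f \<Rightarrow> 'a::{comm_ring_1,real_algebra_1}" and jg :: "'g \<Rightarrow> 'a"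
    and sc :: "'a \<Rightarrow> 'w::ab_group_add \<Rightarrow> 'w" and d :: "'a \<Rightarrow> 'w"
    and L :: "('a \<Rightarrow> 'a) \<Rightarrow> 'w \<Rightarrow> 'w"
    and cc ee eu :: "'i \<Rightarrow> 'a \<Rightarrow> 'a"
    and v w :: 'g and f h :: 'f
  assumes "lie_algebra br" and "lie_action br act" and "dual_basis e ed"
    and "\<forall>r f. jF (of_real r * f) = of_real r * jF f"
    and "\<forall>f1 f2. jF (f1 + f2) = jF f1 + jF f2"
    and "\<forall>f1 f2. jF (f1 * f2) = jF f1 * jF f2" and "jF 1 = 1"
    and "linear jg"
    and "gen_alg jF jg = UNIV"
    and "forms_module sc" and "differential sc d" and "gen_forms sc d = UNIV"
    and "lie_derivative sc d L"
    and "\<forall>i. is_deriv (ee i) \<and> is_deriv (eu i) \<and> is_deriv (cc i)"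
    and "\<forall>i u. ee i (jg u) = jg (br (e i) u)" and "\<forall>i g. ee i (jF g) = 0"
    and "\<forall>i u. eu i (jg u) = of_real (ed i u)" and "\<forall>i g. eu i (jF g) = 0"
    and "\<forall>i u. cc i (jg u) = 0" and "\<forall>i g. cc i (jF g) = jF (act (e i) g)"
  shows "hat_nabla sc L cc ee eu (jg v) (d (jg w)) = sc (of_real (1/2)) (d (jg (br v w))) \<and>
     hat_nabla sc L cc ee eu (jg v) (d (jF h)) = d (jF (act v h)) \<and>
     hat_nabla sc L cc ee eu (jF f) (d (jg w)) = 0 \<and>
     hat_nabla sc L cc ee eu (jF f) (d (jF h)) = 0"
proof -
  note A = assms
  have scm: "\<And>a b x. sc (a * b) x = sc a (sc b x)" and sc1: "\<And>x. sc 1 x = x"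
    and scadd: "\<And>a b x. sc (a + b) x = sc a x + sc b x"
    and scadd2: "\<And>a x y. sc a (x + y) = sc a x + sc a y"
    using A(10) unfolding forms_module_def by auto
  have dadd: "\<And>a b. d (a + b) = d a + d b"
    and dsc: "\<And>r a. d (of_real r * a) = sc (of_real r) (d a)"
    and dmul: "\<And>a b. d (a * b) = sc a (d b) + sc b (d a)"
    using A(11) unfolding differential_def by auto
  have sc0: "\<And>x. sc 0 x = 0" using scadd[of 0 0] by simp
  have sca0: "\<And>a. sc a 0 = 0" using scadd2[of _ 0 0] by simp
  have scneg: "\<And>a x. sc a (- x) = - sc a x"
    by (metis add_eq_0_iff sca0 scadd2)
  have scsum: "\<And>a g. sc a (\<Sum>i\<in>(UNIV::'i set). g i) = (\<Sum>i\<in>UNIV. sc a (g i))"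
  proof -
    fix a and g :: "'i \<Rightarrow> 'w"
    have "\<And>S. finite S \<Longrightarrow> sc a (\<Sum>i\<in>S. g i) = (\<Sum>i\<in>S. sc a (g i))"
    proof -
      fix S :: "'i set" assume "finite S"
      then show "sc a (\<Sum>i\<in>S. g i) = (\<Sum>i\<in>S. sc a (g i))"
        by (induction S rule: finite_induct) (auto simp: sca0 scadd2)
    qed
    then show "sc a (\<Sum>i\<in>(UNIV::'i set). g i) = (\<Sum>i\<in>UNIV. sc a (g i))" by simp
  qed
  have d0: "d 0 = 0" using dadd[of 0 0] by simp
  have dneg: "\<And>a. d (- a) = - d a" by (metis add_eq_0_iff d0 dadd)
  have d1: "d 1 = 0" using dmul[of 1 1] by (simp add: sc1)
  have dof: "\<And>r. d (of_real r) = 0" using dsc[of _ 1] d1 sca0 by simp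
  have dsum: "\<And>g. d (\<Sum>i\<in>(UNIV::'i set). g i) = (\<Sum>i\<in>UNIV. d (g i))"
  proof -
    fix g :: "'i \<Rightarrow> 'a"
    have "\<And>S. finite S \<Longrightarrow> d (\<Sum>i\<in>S. g i) = (\<Sum>i\<in>S. d (g i))"
    proof -
      fix S :: "'i set" assume "finite S"
      then show "d (\<Sum>i\<in>S. g i) = (\<Sum>i\<in>S. d (g i))"
        by (induction S rule: finite_induct) (auto simp: d0 dadd)
    qed
    then show "d (\<Sum>i\<in>(UNIV::'i set). g i) = (\<Sum>i\<in>UNIV. d (g i))" by simp
  qed
  have jF0: "jF 0 = 0" using A(5) by (metis add_cancel_right_right)
  have jFsum: "\<And>g. jF (\<Sum>i\<in>(UNIV::'i set). g i) = (\<Sum>i\<in>UNIV. jF (g i))"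
  proof -
    fix g :: "'i \<Rightarrow> 'f"
    have "\<And>S. finite S \<Longrightarrow> jF (\<Sum>i\<in>S. g i) = (\<Sum>i\<in>S. jF (g i))"
    proof -
      fix S :: "'i set" assume "finite S"
      then show "jF (\<Sum>i\<in>S. g i) = (\<Sum>i\<in>S. jF (g i))"
        by (induction S rule: finite_induct) (auto simp: jF0 A(5))
    qed
    then show "jF (\<Sum>i\<in>(UNIV::'i set). g i) = (\<Sum>i\<in>UNIV. jF (g i))" by simp
  qed
  define X where "X = (\<lambda>i b. - (cc i b + of_real (1/2) * ee i b))"
  have dX: "is_deriv (X i)" for i
  proof -
    have c: "is_deriv (cc i)" and ee: "is_deriv (ee i)" using A(14) by auto
    have ca: "\<And>a b. cc i (a + b) = cc i a + cc i b" "\<And>r a. cc i (of_real r * a) = of_real r * cc i a"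
      "\<And>a b. cc i (a * b) = a * cc i b + b * cc i a" using c unfolding is_deriv_def by blast+
    have ea: "\<And>a b. ee i (a + b) = ee i a + ee i b" "\<And>r a. ee i (of_real r * a) = of_real r * ee i a"
      "\<And>a b. ee i (a * b) = a * ee i b + b * ee i a" using ee unfolding is_deriv_def by blast+
    show ?thesis unfolding is_deriv_def X_def
    proof (intro conjI allI)
      fix a b
      show "- (cc i (a + b) + of_real (1 / 2) * ee i (a + b)) =
        - (cc i a + of_real (1 / 2) * ee i a) + - (cc i b + of_real (1 / 2) * ee i b)"
        by (simp only: ca ea) (simp add: algebra_simps)
      show "- (cc i (a * b) + of_real (1 / 2) * ee i (a * b)) =
        a * - (cc i b + of_real (1 / 2) * ee i b) + b * - (cc i a + of_real (1 / 2) * ee i a)"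
        by (simp only: ca ea) (simp add: algebra_simps)
    next
      fix r a
      show "- (cc i (of_real r * a) + of_real (1 / 2) * ee i (of_real r * a)) =
        of_real r * - (cc i a + of_real (1 / 2) * ee i a)"
        by (simp only: ca(2) ea(2)) (simp add: algebra_simps)
    qed
  qed
  have Ld: "\<And>D b. is_deriv D \<Longrightarrow> L D (d b) = d (D b)"
    using A(13) unfolding lie_derivative_def by blast
  have deu: "is_deriv (eu i)" for i using A(14) by auto
  have hn: "\<And>a x. hat_nabla sc L cc ee eu a x =
      (\<Sum>i\<in>UNIV. sc (X i a) (L (eu i) x) - sc (eu i a) (L (X i) x))"
    unfolding hat_nabla_def X_def Let_def by simp
  have Leug: "L (eu i) (d (jg u)) = 0" for i u
    using Ld[OF deu] A(17) dof by simp
  have LeuF: "L (eu i) (d (jF g)) = 0" for i g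
    using Ld[OF deu] A(18) d0 by simp
  have jgsc: "jg (r *\<^sub>R u) = of_real r * jg u" for r u
    using A(8) by (simp add: linear_scale scaleR_conv_of_real)
  have jgsum: "jg (\<Sum>i\<in>UNIV. g i) = (\<Sum>i\<in>UNIV. jg (g i))" for g :: "'i \<Rightarrow> 'g"
    using A(8) by (simp add: linear_sum)
  have vexp: "v = (\<Sum>i\<in>UNIV. ed i v *\<^sub>R e i)" using A(3) unfolding dual_basis_def by blast
  have brlin: "linear (br u)" for u using A(1) unfolding lie_algebra_def by blast
  have bras: "br u u' = - br u' u" for u u' using A(1) unfolding lie_algebra_def by blast
  have brv: "(\<Sum>i\<in>UNIV. ed i v *\<^sub>R br (e i) w) = br v w"
  proof -
    have "(\<Sum>i\<in>UNIV. ed i v *\<^sub>R br (e i) w) = - (\<Sum>i\<in>UNIV. ed i v *\<^sub>R br w (e i))"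
      by (simp add: bras[of _ w] sum_negf)
    also have "(\<Sum>i\<in>UNIV. ed i v *\<^sub>R br w (e i)) = br w (\<Sum>i\<in>UNIV. ed i v *\<^sub>R e i)"
      using brlin[of w] by (simp add: linear_sum linear_scale)
    finally show ?thesis using vexp bras by metis
  qed
  have actlin: "linear (\<lambda>u. act u h)" using A(2) unfolding lie_action_def by blast
  have actv: "act v h = (\<Sum>i\<in>UNIV. of_real (ed i v) * act (e i) h)"
  proof -
    have "act v h = act (\<Sum>i\<in>UNIV. ed i v *\<^sub>R e i) h" using vexp by simp
    also have "\<dots> = (\<Sum>i\<in>UNIV. ed i v *\<^sub>R act (e i) h)"
      using linear_sum[OF actlin, of "\<lambda>i. ed i v *\<^sub>R e i" UNIV] linear_scale[OF actlin] by simp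
    finally show ?thesis by (simp add: scaleR_conv_of_real)
  qed
  have p1: "hat_nabla sc L cc ee eu (jg v) (d (jg w)) = sc (of_real (1/2)) (d (jg (br v w)))"
  proof -
    have t: "sc (X i (jg v)) (L (eu i) (d (jg w))) - sc (eu i (jg v)) (L (X i) (d (jg w)))
        = sc (of_real (1/2)) (d (jg (ed i v *\<^sub>R br (e i) w)))" for i
    proof -
      have "L (X i) (d (jg w)) = d (X i (jg w))" using Ld[OF dX] by simp
      also have "\<dots> = - sc (of_real (1/2)) (d (jg (br (e i) w)))"
        unfolding X_def using A(15,19) by (simp add: dneg dsc)
      finally have "L (X i) (d (jg w)) = - sc (of_real (1/2)) (d (jg (br (e i) w)))" .
      then have "sc (X i (jg v)) (L (eu i) (d (jg w))) - sc (eu i (jg v)) (L (X i) (d (jg w)))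
         = sc (of_real (ed i v)) (sc (of_real (1/2)) (d (jg (br (e i) w))))"
        using Leug A(17) sca0 scneg by simp
      also have "\<dots> = sc (of_real (1/2)) (sc (of_real (ed i v)) (d (jg (br (e i) w))))"
        by (metis scm mult.commute)
      also have "\<dots> = sc (of_real (1/2)) (d (jg (ed i v *\<^sub>R br (e i) w)))"
        by (simp add: jgsc dsc)
      finally show ?thesis .
    qed
    have "hat_nabla sc L cc ee eu (jg v) (d (jg w))
       = (\<Sum>i\<in>UNIV. sc (of_real (1/2)) (d (jg (ed i v *\<^sub>R br (e i) w))))"
      unfolding hn using t by simp
    also have "\<dots> = sc (of_real (1/2)) (d (jg (br v w)))"
      by (simp add: scsum[symmetric] dsum[symmetric] jgsum[symmetric] brv)
    finally show ?thesis .
  qed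
  have p2: "hat_nabla sc L cc ee eu (jg v) (d (jF h)) = d (jF (act v h))"
  proof -
    have t: "sc (X i (jg v)) (L (eu i) (d (jF h))) - sc (eu i (jg v)) (L (X i) (d (jF h)))
        = d (jF (of_real (ed i v) * act (e i) h))" for i
    proof -
      have "L (X i) (d (jF h)) = d (X i (jF h))" using Ld[OF dX] by simp
      also have "\<dots> = - d (jF (act (e i) h))"
        unfolding X_def using A(16,20) by (simp add: dneg)
      finally have "L (X i) (d (jF h)) = - d (jF (act (e i) h))" .
      then show ?thesis
        using LeuF A(17) sca0 scneg by (simp add: A(4) dsc)
    qed
    show ?thesis unfolding hn using t
      by (simp add: dsum[symmetric] jFsum[symmetric] actv[symmetric])
  qed
  have p3: "hat_nabla sc L cc ee eu (jF f) (d (jg w)) = 0"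
    unfolding hn using Leug A(18) sca0 sc0 by simp
  have p4: "hat_nabla sc L cc ee eu (jF f) (d (jF h)) = 0"
    unfolding hn using LeuF A(18) sca0 sc0 by simp
  show ?thesis using p1 p2 p3 p4 by blast
qed

end
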